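(* Let $\Omega\subset\mathbb{R}^2$ be a bounded domain, $X\subset\overline{\Omega}$ finite with $X\setminus\partial\Omega\subset\mathrm{int}(\mathrm{conv}(X\cap\partial\Omega))$, and $f_X$ a discrete load on $X$. Let $x_1,x_2,x_3\in X$ be colinear with $x_2\in[x_1,x_3]$. Assume $(\mathbf{s},\mathbf{q},\mathbf{r})$ solves $(\mathcal{P}_X)$ and $(\mathbf{u}_1,\mathbf{u}_2,\mathbf{w})$ (together with some slack vectors) solves $(\mathcal{P}_X^* )$, and set $\mathbf{z}=\frac12\mathbf{w}$, identified with the function $z:X\to\mathbb{R}$ that equals $z_i$ at $\chi(i)$ and vanishes on $X\cap\partial\Omega$. Let $k$ be the bar index with $\{\chi_-(k),\chi_+(k)\}=\{x_1,x_3\}$. If $s_k\ne0$, then the points $(x_1,z(x_1)),(x_2,z(x_2)),(x_3,z(x_3))\in\mathbb{R}^3$ are colinear.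
   Context: Discrete setting: $\bar n=\#X$, $n=\#(X\setminus\partial\Omega)$, enumeration $\chi:\{1,\dots,n\}\to X\setminus\partial\Omega$; $m=\bar n(\bar n-1)/2$ and enumeration $k\mapsto\{\chi_-(k),\chi_+(k)\}$ of all unordered pairs of distinct points of $X$. $\mathbf{f}\in\mathbb{R}^n$, $f_i=f_X(\{\chi(i)\})$; $l_k=|\chi_+(k)-\chi_-(k)|$. Vectors $\mathbf{u}_1,\mathbf{u}_2,\mathbf{w}\in\mathbb{R}^n$ are identified with $u:X\to\mathbb{R}^2$, $w:X\to\mathbb{R}$ vanishing on $X\cap\partial\Omega$ ($(u_{1;i},u_{2;i})=u(\chi(i))$, $w_i=w(\chi(i))$). $\mathbf{B}_1,\mathbf{B}_2,\mathbf{D}\in\mathbb{R}^{m\times n}$: $(\mathbf{B}_1\mathbf{u}_1+\mathbf{B}_2\mathbf{u}_2)_k=(u(\chi_+(k))-u(\chi_-(k)))\cdot(\chi_+(k)-\chi_-(k))/l_k$, $(\mathbf{D}\mathbf{w})_k=w(\chi_+(k))-w(\chi_-(k))$. $\mathrm{K}=\{(t_1,t_2,t_3):t_1,t_2\ge0,2t_1t_2\ge t_3^2\}$, applied componentwise as $\mathrm{K}^m$. $(\mathcal{P}_X)$: $\inf\{\mathbf{l}^\top\mathbf{s}+2\mathbf{l}^\top\mathbf{r}:\mathbf{s},\mathbf{r}\in\mathbb{R}^m_+,\mathbf{q}\in\mathbb{R}^m,\mathbf{B}_1^\top\mathbf{s}=\mathbf{B}_2^\top\mathbf{s}=\mathbf{0},\mathbf{D}^\top\mathbf{q}=\mathbf{f},(\mathbf{r},\mathbf{s},\mathbf{q})\in\mathrm{K}^m\}$.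 $(\mathcal{P}_X^* )$: $\sup\{\mathbf{f}^\top\mathbf{w}:\mathbf{t}_2+\mathbf{B}_1\mathbf{u}_1+\mathbf{B}_2\mathbf{u}_2=\mathbf{l},\mathbf{t}_3+\mathbf{D}\mathbf{w}=\mathbf{0},\mathbf{t}_1=2\mathbf{l},(\mathbf{t}_1,\mathbf{t}_2,\mathbf{t}_3)\in\mathrm{K}^m\}$ over $\mathbf{u}_1,\mathbf{u}_2,\mathbf{w}\in\mathbb{R}^n$, $\mathbf{t}_1,\mathbf{t}_2\in\mathbb{R}^m_+$, $\mathbf{t}_3\in\mathbb{R}^m$. *)

theory Defs
  imports "HOL-Analysis.Analysis"
begin

type_synonym pt = "real^2"

definition inK :: "real \<Rightarrow> real \<Rightarrow> real \<Rightarrow> bool" where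
  "inK t1 t2 t3 \<longleftrightarrow> t1 \<ge> 0 \<and> t2 \<ge> 0 \<and> 2 * t1 * t2 \<ge> t3\<^sup>2"

definition barlen :: "(nat \<Rightarrow> pt) \<Rightarrow> (nat \<Rightarrow> pt) \<Rightarrow> nat \<Rightarrow> real" where
  "barlen chim chip k = norm (chip k - chim k)"

definition inc :: "(nat \<Rightarrow> pt) \<Rightarrow> (nat \<Rightarrow> pt) \<Rightarrow> (nat \<Rightarrow> pt) \<Rightarrow> nat \<Rightarrow> nat \<Rightarrow> real" where
  "inc chi chim chip k i =
     (if chi i = chip k then 1 else 0) - (if chi i = chim k then 1 else 0)"

definition Bmat :: "(nat \<Rightarrow> pt) \<Rightarrow> (nat \<Rightarrow> pt) \<Rightarrow> (nat \<Rightarrow> pt) \<Rightarrow> 2 \<Rightarrow> nat \<Rightarrow> nat \<Rightarrow> real" where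
  "Bmat chi chim chip j k i =
     inc chi chim chip k i * (chip k - chim k) $ j / barlen chim chip k"

definition Dmat :: "(nat \<Rightarrow> pt) \<Rightarrow> (nat \<Rightarrow> pt) \<Rightarrow> (nat \<Rightarrow> pt) \<Rightarrow> nat \<Rightarrow> nat \<Rightarrow> real" where
  "Dmat chi chim chip k i = inc chi chim chip k i"

text \<open>Feasibility and objective for (P_X); vectors in R^n, R^m are functions on {..<n}, {..<m}.\<close>
definition primal_feasible ::
  "(nat \<Rightarrow> pt) \<Rightarrow> nat \<Rightarrow> (nat \<Rightarrow> pt) \<Rightarrow> (nat \<Rightarrow> pt) \<Rightarrow> nat \<Rightarrow> (nat \<Rightarrow> real)
   \<Rightarrow> (nat \<Rightarrow> real) \<Rightarrow> (nat \<Rightarrow> real) \<Rightarrow> (nat \<Rightarrow> real) \<Rightarrow> bool" where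
  "primal_feasible chi n chim chip m f s q r \<longleftrightarrow>
     (\<forall>k<m. s k \<ge> 0 \<and> r k \<ge> 0 \<and> inK (r k) (s k) (q k)) \<and>
     (\<forall>i<n. (\<Sum>k<m. Bmat chi chim chip 1 k i * s k) = 0) \<and>
     (\<forall>i<n. (\<Sum>k<m. Bmat chi chim chip 2 k i * s k) = 0) \<and>
     (\<forall>i<n. (\<Sum>k<m. Dmat chi chim chip k i * q k) = f i)"

definition primal_obj ::
  "(nat \<Rightarrow> pt) \<Rightarrow> (nat \<Rightarrow> pt) \<Rightarrow> nat \<Rightarrow> (nat \<Rightarrow> real) \<Rightarrow> (nat \<Rightarrow> real) \<Rightarrow> real" where
  "primal_obj chim chip m s r =
     (\<Sum>k<m. barlen chim chip k * s k) + 2 * (\<Sum>k<m. barlen chim chip k * r k)"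

definition primal_solution ::
  "(nat \<Rightarrow> pt) \<Rightarrow> nat \<Rightarrow> (nat \<Rightarrow> pt) \<Rightarrow> (nat \<Rightarrow> pt) \<Rightarrow> nat \<Rightarrow> (nat \<Rightarrow> real)
   \<Rightarrow> (nat \<Rightarrow> real) \<Rightarrow> (nat \<Rightarrow> real) \<Rightarrow> (nat \<Rightarrow> real) \<Rightarrow> bool" where
  "primal_solution chi n chim chip m f s q r \<longleftrightarrow>
     primal_feasible chi n chim chip m f s q r \<and>
     (\<forall>s' q' r'. primal_feasible chi n chim chip m f s' q' r' \<longrightarrow>
        primal_obj chim chip m s r \<le> primal_obj chim chip m s' r')"

definition dual_feasible ::
  "(nat \<Rightarrow> pt) \<Rightarrow> nat \<Rightarrow> (nat \<Rightarrow> pt) \<Rightarrow> (nat \<Rightarrow> pt) \<Rightarrow> nat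
   \<Rightarrow> (nat \<Rightarrow> real) \<Rightarrow> (nat \<Rightarrow> real) \<Rightarrow> (nat \<Rightarrow> real)
   \<Rightarrow> (nat \<Rightarrow> real) \<Rightarrow> (nat \<Rightarrow> real) \<Rightarrow> (nat \<Rightarrow> real) \<Rightarrow> bool" where
  "dual_feasible chi n chim chip m u1 u2 w t1 t2 t3 \<longleftrightarrow>
     (\<forall>k<m.
        t1 k \<ge> 0 \<and> t2 k \<ge> 0 \<and>
        t2 k + (\<Sum>i<n. Bmat chi chim chip 1 k i * u1 i + Bmat chi chim chip 2 k i * u2 i)
          = barlen chim chip k \<and>
        t3 k + (\<Sum>i<n. Dmat chi chim chip k i * w i) = 0 \<and>
        t1 k = 2 * barlen chim chip k \<and>
        inK (t1 k) (t2 k) (t3 k))"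

definition dual_obj :: "nat \<Rightarrow> (nat \<Rightarrow> real) \<Rightarrow> (nat \<Rightarrow> real) \<Rightarrow> real" where
  "dual_obj n f w = (\<Sum>i<n. f i * w i)"

definition dual_solution ::
  "(nat \<Rightarrow> pt) \<Rightarrow> nat \<Rightarrow> (nat \<Rightarrow> pt) \<Rightarrow> (nat \<Rightarrow> pt) \<Rightarrow> nat \<Rightarrow> (nat \<Rightarrow> real)
   \<Rightarrow> (nat \<Rightarrow> real) \<Rightarrow> (nat \<Rightarrow> real) \<Rightarrow> (nat \<Rightarrow> real) \<Rightarrow> bool" where
  "dual_solution chi n chim chip m f u1 u2 w \<longleftrightarrow>
     (\<exists>t1 t2 t3. dual_feasible chi n chim chip m u1 u2 w t1 t2 t3) \<and>
     (\<forall>u1' u2' w' t1' t2' t3'. dual_feasible chi n chim chip m u1' u2' w' t1' t2' t3' \<longrightarrow>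
        dual_obj n f w' \<le> dual_obj n f w)"

definition node_fun :: "(nat \<Rightarrow> pt) \<Rightarrow> nat \<Rightarrow> (nat \<Rightarrow> real) \<Rightarrow> pt \<Rightarrow> real" where
  "node_fun chi n v x = (if \<exists>i<n. chi i = x then v (THE i. i < n \<and> chi i = x) else 0)"

end

theory Submission
  imports Defs
begin


lemma farkas_abs:
  fixes comb :: "'v \<Rightarrow> real \<Rightarrow> 'v \<Rightarrow> 'v" and \<phi> :: "'j \<Rightarrow> 'v \<Rightarrow> real"
  assumes "finite J"
  and "\<And>j x c z. j \<in> J \<Longrightarrow> \<phi> j (comb x c z) = \<phi> j x + c * \<phi> j z"
  and "\<And>x c z. \<psi> (comb x c z) = \<psi> x + c * \<psi> z"
  and "\<And>x. (\<forall>j\<in>J. \<phi> j x \<ge> 0) \<Longrightarrow> \<psi> x \<ge> 0"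
  shows "\<exists>lam. (\<forall>j\<in>J. lam j \<ge> 0) \<and> (\<forall>x. \<psi> x = (\<Sum>j\<in>J. lam j * \<phi> j x))"
  using assms
proof (induction J arbitrary: \<phi> \<psi> rule: finite_induct)
  case empty
  have "\<psi> x = 0" for x
  proof -
    have "\<psi> x \<ge> 0" using empty by auto
    moreover have "\<psi> (comb x (-2) x) \<ge> 0" by (rule empty(3)) simp
    moreover have "\<psi> (comb x (-2) x) = - \<psi> x" using empty(2) by simp
    ultimately show ?thesis by linarith
  qed
  then show ?case by auto
next
  case (insert j0 J)
  show ?case
  proof (cases "\<forall>x. (\<forall>j\<in>J. \<phi> j x \<ge> 0) \<longrightarrow> \<psi> x \<ge> 0")
    case True
    from insert.IH[of \<phi> \<psi>] insert.prems True obtain lam where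
      l: "\<forall>j\<in>J. lam j \<ge> 0" "\<forall>x. \<psi> x = (\<Sum>j\<in>J. lam j * \<phi> j x)" by auto
    have "\<forall>x. \<psi> x = (\<Sum>j\<in>insert j0 J. (lam(j0:=0)) j * \<phi> j x)"
    proof
      fix x
      have "(\<Sum>j\<in>insert j0 J. (lam(j0:=0)) j * \<phi> j x) = (\<Sum>j\<in>J. (lam(j0:=0)) j * \<phi> j x)"
        using insert.hyps by simp
      also have "\<dots> = (\<Sum>j\<in>J. lam j * \<phi> j x)"
        by (rule sum.cong) (use insert.hyps in auto)
      finally show "\<psi> x = (\<Sum>j\<in>insert j0 J. (lam(j0:=0)) j * \<phi> j x)" using l by simp
    qed
    moreover have "\<forall>j\<in>insert j0 J. (lam(j0:=0)) j \<ge> 0" using l by auto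
    ultimately show ?thesis by blast
  next
    case False
    then obtain z where z: "\<forall>j\<in>J. \<phi> j z \<ge> 0" "\<psi> z < 0" by force
    have nz: "\<phi> j0 z < 0"
    proof (rule ccontr)
      assume "\<not> \<phi> j0 z < 0"
      then have "\<forall>j\<in>insert j0 J. \<phi> j z \<ge> 0" using z by auto
      then have "\<psi> z \<ge> 0" using insert.prems(3) by blast
      then show False using z by simp
    qed
    define P where "P x = comb x (-(\<phi> j0 x / \<phi> j0 z)) z" for x
    define \<phi>' where "\<phi>' j x = \<phi> j (P x)" for j x
    define \<psi>' where "\<psi>' x = \<psi> (P x)" for x
    have linj: "\<phi> j (P x) = \<phi> j x - (\<phi> j0 x / \<phi> j0 z) * \<phi> j z" if "j \<in> insert j0 J" for j x
      using insert.prems(1)[OF that] unfolding P_def by simp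
    have linp: "\<psi> (P x) = \<psi> x - (\<phi> j0 x / \<phi> j0 z) * \<psi> z" for x
      using insert.prems(2) unfolding P_def by simp
    have j0c: "\<phi> j0 (comb x c y) = \<phi> j0 x + c * \<phi> j0 y" for x c y
      using insert.prems(1) by simp
    have "\<exists>lam. (\<forall>j\<in>J. lam j \<ge> 0) \<and> (\<forall>x. \<psi>' x = (\<Sum>j\<in>J. lam j * \<phi>' j x))"
    proof (rule insert.IH)
      show "\<phi>' j (comb x c y) = \<phi>' j x + c * \<phi>' j y" if "j \<in> J" for j x c y
      proof -
        have jj: "j \<in> insert j0 J" using that by simp
        show ?thesis unfolding \<phi>'_def linj[OF jj] using insert.prems(1)[OF jj] j0c nz
          by (simp add: field_simps)
      qed
      show "\<psi>' (comb x c y) = \<psi>' x + c * \<psi>' y" for x c y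
        unfolding \<psi>'_def linp using insert.prems(2) j0c nz
          by (simp add: field_simps)
      show "0 \<le> \<psi>' x" if "\<forall>j\<in>J. 0 \<le> \<phi>' j x" for x
      proof -
        have "\<phi> j0 (P x) = 0" using linj[of j0 x] nz by simp
        then have "\<forall>j\<in>insert j0 J. \<phi> j (P x) \<ge> 0" using that unfolding \<phi>'_def by auto
        then show ?thesis unfolding \<psi>'_def using insert.prems(3) by blast
      qed
    qed
    then obtain mu where mu: "\<forall>j\<in>J. mu j \<ge> 0" "\<forall>x. \<psi>' x = (\<Sum>j\<in>J. mu j * \<phi>' j x)" by blast
    define c0 where "c0 = (\<psi> z - (\<Sum>j\<in>J. mu j * \<phi> j z)) / \<phi> j0 z"
    have "(\<Sum>j\<in>J. mu j * \<phi> j z) \<ge> 0" using mu z by (simp add: sum_nonneg)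
    then have c0: "c0 \<ge> 0" unfolding c0_def using nz z
      by (simp add: divide_nonpos_neg)
    have rep: "\<psi> x = (\<Sum>j\<in>insert j0 J. (mu(j0:=c0)) j * \<phi> j x)" for x
    proof -
      have "\<psi> x - (\<phi> j0 x / \<phi> j0 z) * \<psi> z = (\<Sum>j\<in>J. mu j * (\<phi> j x - (\<phi> j0 x / \<phi> j0 z) * \<phi> j z))"
        using mu(2) linj linp unfolding \<psi>'_def \<phi>'_def by simp
      also have "\<dots> = (\<Sum>j\<in>J. mu j * \<phi> j x) - (\<phi> j0 x / \<phi> j0 z) * (\<Sum>j\<in>J. mu j * \<phi> j z)"
        by (simp add: algebra_simps sum_subtractf sum_distrib_left)
      finally have e: "\<psi> x = (\<Sum>j\<in>J. mu j * \<phi> j x) + c0 * \<phi> j0 x"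
        unfolding c0_def using nz by (simp add: field_simps)
      have "(\<Sum>j\<in>insert j0 J. (mu(j0:=c0)) j * \<phi> j x) = c0 * \<phi> j0 x + (\<Sum>j\<in>J. (mu(j0:=c0)) j * \<phi> j x)"
        using insert.hyps by simp
      also have "(\<Sum>j\<in>J. (mu(j0:=c0)) j * \<phi> j x) = (\<Sum>j\<in>J. mu j * \<phi> j x)"
        by (rule sum.cong) (use insert.hyps in auto)
      finally show ?thesis using e by simp
    qed
    moreover have "\<forall>j\<in>insert j0 J. (mu(j0:=c0)) j \<ge> 0" using mu c0 by auto
    ultimately show ?thesis by blast
  qed
qed



lemma T_nonneg:
  fixes L s r q a b :: real
  assumes "L > 0" "s \<ge> 0" "r \<ge> 0" "2 * r * s \<ge> q\<^sup>2" "b\<^sup>2 \<le> 4 * L * (L - a)"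
  shows "q * b \<le> s * (L - a) + 2 * L * r"
proof -
  have g: "L - a \<ge> 0"
  proof (rule ccontr)
    assume "\<not> L - a \<ge> 0"
    then have "4 * L * (L - a) < 0" using assms(1) by (simp add: mult_pos_neg)
    then show False using assms(5) zero_le_power2[of b] by linarith
  qed
  have "(q * b)\<^sup>2 = q\<^sup>2 * b\<^sup>2" by (simp add: power_mult_distrib)
  also have "\<dots> \<le> (2 * r * s) * (4 * L * (L - a))"
    by (rule mult_mono) (use assms g in auto)
  also have "\<dots> = 4 * (s * (L - a)) * (2 * L * r)" by (simp add: algebra_simps)
  also have "\<dots> \<le> (s * (L - a) + 2 * L * r)\<^sup>2"
  proof -
    have "(s * (L - a) + 2 * L * r)\<^sup>2 = 4 * (s * (L - a)) * (2 * L * r) + (s * (L - a) - 2 * L * r)\<^sup>2"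
      by (simp add: power2_eq_square algebra_simps)
    then show ?thesis using zero_le_power2[of "s * (L - a) - 2 * L * r"] by linarith
  qed
  finally have "(q * b)\<^sup>2 \<le> (s * (L - a) + 2 * L * r)\<^sup>2" .
  moreover have "s * (L - a) + 2 * L * r \<ge> 0" using assms g by simp
  ultimately show ?thesis using power2_le_imp_le by blast
qed

lemma T_zero:
  fixes L s r q a b :: real
  assumes "L > 0" "s > 0" "r \<ge> 0" "2 * r * s \<ge> q\<^sup>2" "b\<^sup>2 \<le> 4 * L * (L - a)"
    and "q * b = s * (L - a) + 2 * L * r"
  shows "b\<^sup>2 = 4 * L * (L - a)"
proof (rule ccontr)
  assume ne: "b\<^sup>2 \<noteq> 4 * L * (L - a)"
  then have lt: "b\<^sup>2 < 4 * L * (L - a)" using assms(5) by simp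
  have g: "L - a > 0"
  proof (rule ccontr)
    assume "\<not> L - a > 0"
    then have "4 * L * (L - a) \<le> 0" using assms(1) by (simp add: mult_nonneg_nonpos)
    then show False using lt zero_le_power2[of b] by linarith
  qed
  show False
  proof (cases "q = 0")
    case True
    then have "s * (L - a) + 2 * L * r = 0" using assms(6) by simp
    moreover have "s * (L - a) > 0" using assms(2) g by simp
    moreover have "2 * L * r \<ge> 0" using assms by simp
    ultimately show False by linarith
  next
    case False
    then have qp: "q\<^sup>2 > 0" by simp
    have "(q * b)\<^sup>2 = q\<^sup>2 * b\<^sup>2" by (simp add: power_mult_distrib)
    also have "\<dots> < q\<^sup>2 * (4 * L * (L - a))" using qp lt by simp
    also have "\<dots> \<le> (2 * r * s) * (4 * L * (L - a))"
      by (rule mult_right_mono) (use assms g in auto)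
    also have "\<dots> = 4 * (s * (L - a)) * (2 * L * r)" by (simp add: algebra_simps)
    also have "\<dots> \<le> (s * (L - a) + 2 * L * r)\<^sup>2"
    proof -
    have "(s * (L - a) + 2 * L * r)\<^sup>2 = 4 * (s * (L - a)) * (2 * L * r) + (s * (L - a) - 2 * L * r)\<^sup>2"
      by (simp add: power2_eq_square algebra_simps)
    then show ?thesis using zero_le_power2[of "s * (L - a) - 2 * L * r"] by linarith
  qed
    finally show False using assms(6) by simp
  qed
qed

lemma collin_real:
  fixes p q l1 l2 g1 g2 :: real
  assumes "l1 > 0" "l2 > 0" "p\<^sup>2 \<le> 4 * l1 * g1" "q\<^sup>2 \<le> 4 * l2 * g2"
    and "(p + q)\<^sup>2 = 4 * (l1 + l2) * (g1 + g2)"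
  shows "p * l2 = q * l1"
proof -
  have "(p + q)\<^sup>2 * (l1 * l2) = (l1 + l2) * ((4 * l1 * g1) * l2 + (4 * l2 * g2) * l1)"
    using assms(5) by (simp add: algebra_simps)
  also have "\<dots> \<ge> (l1 + l2) * (p\<^sup>2 * l2 + q\<^sup>2 * l1)"
    by (rule mult_left_mono, rule add_mono) (use assms in \<open>auto intro: mult_right_mono\<close>)
  finally have "(l1 + l2) * (p\<^sup>2 * l2 + q\<^sup>2 * l1) \<le> (p + q)\<^sup>2 * (l1 * l2)" .
  moreover have "(l1 + l2) * (p\<^sup>2 * l2 + q\<^sup>2 * l1) = (p + q)\<^sup>2 * (l1 * l2) + (p * l2 - q * l1)\<^sup>2"
    by (simp add: power2_eq_square algebra_simps)
  ultimately have "(p * l2 - q * l1)\<^sup>2 \<le> 0" by linarith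
  then show ?thesis by simp
qed



lemma kkt_abs:
  fixes comb :: "'v \<Rightarrow> real \<Rightarrow> 'v \<Rightarrow> 'v" and A B :: "nat \<Rightarrow> 'v \<Rightarrow> real"
    and F :: "'v \<Rightarrow> real" and L :: "nat \<Rightarrow> real"
  assumes fin: "finite K" and Lpos: "\<And>k. k\<in>K \<Longrightarrow> L k > 0"
  and linA: "\<And>k x c z. A k (comb x c z) = A k x + c * A k z"
  and linB: "\<And>k x c z. B k (comb x c z) = B k x + c * B k z"
  and linF: "\<And>x c z. F (comb x c z) = F x + c * F z"
  and feas: "\<forall>k\<in>K. (B k xs)\<^sup>2 \<le> 4 * L k * (L k - A k xs)"
  and opt: "\<And>x. \<forall>k\<in>K. (B k x)\<^sup>2 \<le> 4 * L k * (L k - A k x) \<Longrightarrow> F x \<le> F xs"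
  shows "\<exists>lam. (\<forall>k\<in>K. lam k \<ge> 0) \<and>
     (\<forall>k\<in>K. lam k \<noteq> 0 \<longrightarrow> (B k xs)\<^sup>2 = 4 * L k * (L k - A k xs)) \<and>
     (\<forall>d. F d = (\<Sum>k\<in>K. lam k * (2 * B k xs * B k d + 4 * L k * A k d)))"
proof -
  define J where "J = {k\<in>K. (B k xs)\<^sup>2 = 4 * L k * (L k - A k xs)}"
  have finJ: "finite J" using fin unfolding J_def by simp
  define \<phi> where "\<phi> k d = - (2 * B k xs * B k d + 4 * L k * A k d)" for k d
  have hyp: "- F d \<ge> 0" if dh: "\<forall>k\<in>J. \<phi> k d \<ge> 0" for d
  proof (rule ccontr)
    assume "\<not> - F d \<ge> 0"
    then have Fd: "F d > 0" by simp
    define \<epsilon> where "\<epsilon> = F d / (2 * (\<bar>F xs\<bar> + 1))"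
    have epos: "\<epsilon> > 0" unfolding \<epsilon>_def using Fd by (simp add: add_pos_nonneg)
    have "\<epsilon> * \<bar>F xs\<bar> < F d"
    proof -
      have "\<epsilon> * \<bar>F xs\<bar> \<le> \<epsilon> * (\<bar>F xs\<bar> + 1)" using epos by simp
      also have "\<dots> = F d / 2" unfolding \<epsilon>_def by (simp add: field_simps)
      finally show ?thesis using Fd by simp
    qed
    moreover have "\<epsilon> * F xs \<le> \<epsilon> * \<bar>F xs\<bar>" using epos by (simp add: mult_left_mono)
    ultimately have Fd': "F d - \<epsilon> * F xs > 0" by linarith
    define d' where "d' = comb d (-\<epsilon>) xs"
    define y where "y t = comb xs t d'" for t
    have ev: "\<forall>k\<in>K. eventually (\<lambda>t. (B k (y t))\<^sup>2 \<le> 4 * L k * (L k - A k (y t))) (at_right 0)"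
    proof
      fix k assume kK: "k \<in> K"
      define G where "G = (B k xs)\<^sup>2 - 4 * L k * (L k - A k xs)"
      define Dk where "Dk = 2 * B k xs * B k d' + 4 * L k * A k d'"
      define c where "c = (B k d')\<^sup>2"
      have expr: "(B k (y t))\<^sup>2 - 4 * L k * (L k - A k (y t)) = G + t * Dk + t\<^sup>2 * c" for t
        unfolding y_def linA linB G_def Dk_def c_def by (simp add: power2_eq_square algebra_simps)
      show "eventually (\<lambda>t. (B k (y t))\<^sup>2 \<le> 4 * L k * (L k - A k (y t))) (at_right 0)"
      proof (cases "k \<in> J")
        case True
        then have G0: "G = 0" unfolding J_def G_def by simp
        have "\<phi> k d \<ge> 0" using dh True by blast
        moreover have "Dk = - \<phi> k d - \<epsilon> * (2 * (B k xs)\<^sup>2 + 4 * L k * A k xs)"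
          unfolding Dk_def \<phi>_def d'_def linA linB by (simp add: power2_eq_square algebra_simps)
        moreover have "2 * (B k xs)\<^sup>2 + 4 * L k * A k xs = (B k xs)\<^sup>2 + 4 * (L k)\<^sup>2"
          using G0 unfolding G_def by (simp add: power2_eq_square algebra_simps)
        moreover have "(B k xs)\<^sup>2 + 4 * (L k)\<^sup>2 > 0" using Lpos[OF kK]
          by (simp add: add_nonneg_pos)
        ultimately have Dneg: "Dk < 0" using epos
          by (smt (verit, best) mult_pos_pos)
        have lim: "((\<lambda>t. Dk + t * c) \<longlongrightarrow> Dk) (at_right 0)"
          by (intro tendsto_eq_intros) auto
        have e1: "eventually (\<lambda>t. Dk + t * c < 0) (at_right 0)"
          using order_tendstoD(2)[OF lim Dneg] .
        have e2: "eventually (\<lambda>t. (t::real) > 0) (at_right 0)"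
          by (simp add: eventually_at_right_less)
        show ?thesis
          using e1 e2
        proof eventually_elim
          case (elim t)
          have "G + t * Dk + t\<^sup>2 * c = t * (Dk + t * c)" using G0 by (simp add: power2_eq_square algebra_simps)
          also have "\<dots> \<le> 0" using elim by (simp add: mult_pos_neg less_imp_le)
          finally show ?case using expr[of t] by linarith
        qed
      next
        case False
        then have Gneg: "G < 0" using feas kK unfolding J_def G_def by auto
        have lim: "((\<lambda>t. G + t * Dk + t\<^sup>2 * c) \<longlongrightarrow> G) (at_right 0)"
          by (intro tendsto_eq_intros) auto
        have e1: "eventually (\<lambda>t. G + t * Dk + t\<^sup>2 * c < 0) (at_right 0)"
          using order_tendstoD(2)[OF lim Gneg] .
        then show ?thesis
        proof eventually_elim
          case (elim t)
          then show ?case using expr[of t] by linarith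
        qed
      qed
    qed
    have "eventually (\<lambda>t. \<forall>k\<in>K. (B k (y t))\<^sup>2 \<le> 4 * L k * (L k - A k (y t))) (at_right 0)"
      using eventually_ball_finite[OF fin ev] .
    moreover have "eventually (\<lambda>t. (t::real) > 0) (at_right 0)"
      by (simp add: eventually_at_right_less)
    ultimately have "eventually (\<lambda>t. t > 0 \<and> (\<forall>k\<in>K. (B k (y t))\<^sup>2 \<le> 4 * L k * (L k - A k (y t)))) (at_right 0)"
      by (simp add: eventually_conj_iff)
    then obtain t where t: "t > 0" "\<forall>k\<in>K. (B k (y t))\<^sup>2 \<le> 4 * L k * (L k - A k (y t))"
      using eventually_happens[of _ "at_right (0::real)"] by (auto simp: trivial_limit_at_right_real)
    have "F (y t) \<le> F xs" using opt t(2) by blast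
    moreover have "F (y t) = F xs + t * (F d - \<epsilon> * F xs)" unfolding y_def d'_def linF by simp
    moreover have "t * (F d - \<epsilon> * F xs) > 0" using t(1) Fd' by simp
    ultimately show False by linarith
  qed
  have "\<exists>lam. (\<forall>j\<in>J. lam j \<ge> 0) \<and> (\<forall>x. - F x = (\<Sum>j\<in>J. lam j * \<phi> j x))"
  proof (rule farkas_abs[where comb=comb])
    show "finite J" by fact
    show "\<phi> j (comb x c z) = \<phi> j x + c * \<phi> j z" for j x c z
      unfolding \<phi>_def linA linB by (simp add: algebra_simps)
    show "- F (comb x c z) = - F x + c * - F z" for x c z
      unfolding linF by simp
    show "0 \<le> - F x" if "\<forall>j\<in>J. 0 \<le> \<phi> j x" for x using hyp that by blast
  qed
  then obtain lam where lam: "\<forall>j\<in>J. lam j \<ge> 0" "\<forall>x. - F x = (\<Sum>j\<in>J. lam j * \<phi> j x)" by blast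
  define lam' where "lam' k = (if k \<in> J then lam k else 0)" for k
  have "F d = (\<Sum>k\<in>K. lam' k * (2 * B k xs * B k d + 4 * L k * A k d))" for d
  proof -
    have "(\<Sum>k\<in>K. lam' k * (2 * B k xs * B k d + 4 * L k * A k d))
        = (\<Sum>k\<in>K. if k \<in> J then lam k * (2 * B k xs * B k d + 4 * L k * A k d) else 0)"
      by (rule sum.cong) (auto simp: lam'_def)
    also have "\<dots> = (\<Sum>k\<in>J. lam k * (2 * B k xs * B k d + 4 * L k * A k d))"
      unfolding J_def using fin by (simp add: sum.inter_filter)
    also have "\<dots> = - (\<Sum>k\<in>J. lam k * \<phi> k d)"
      unfolding \<phi>_def sum_negf[symmetric] by (rule sum.cong) (simp_all add: algebra_simps)
    also have "\<dots> = F d" using lam(2) by (metis minus_minus)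
    finally show ?thesis by simp
  qed
  moreover have "\<forall>k\<in>K. lam' k \<ge> 0" using lam(1) unfolding lam'_def by auto
  moreover have "\<forall>k\<in>K. lam' k \<noteq> 0 \<longrightarrow> (B k xs)\<^sup>2 = 4 * L k * (L k - A k xs)"
    unfolding lam'_def J_def by auto
  ultimately show ?thesis by blast
qed



lemma sum_unit: "i < (n::nat) \<Longrightarrow> (\<Sum>j<n. c j * (if j = i then 1 else (0::real))) = c i"
proof -
  assume "i < n"
  have "(\<Sum>j<n. c j * (if j = i then 1 else (0::real))) = (\<Sum>j<n. if j = i then c j else 0)"
    by (rule sum.cong) auto
  also have "\<dots> = c i" using \<open>i < n\<close> by (simp add: sum.delta)
  finally show ?thesis .
qed

lemma gap_tight:
  fixes chi chim chip :: "nat \<Rightarrow> pt" and f s q r u1 u2 w :: "nat \<Rightarrow> real"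
  assumes Lpos: "\<And>k. k < m \<Longrightarrow> barlen chim chip k > 0"
  and ps: "primal_solution chi n chim chip m f s q r"
  and ds: "dual_solution chi n chim chip m f u1 u2 w"
  and km: "k0 < m" and sk: "s k0 \<noteq> 0"
  shows "(\<Sum>i<n. Dmat chi chim chip k0 i * w i)\<^sup>2 = 4 * barlen chim chip k0 *
     (barlen chim chip k0 - (\<Sum>i<n. Bmat chi chim chip 1 k0 i * u1 i + Bmat chi chim chip 2 k0 i * u2 i))"
proof -
  define Aop where "Aop k x = (\<Sum>i<n. Bmat chi chim chip 1 k i * fst x i + Bmat chi chim chip 2 k i * fst (snd x) i)"
    for k and x :: "(nat \<Rightarrow> real) \<times> (nat \<Rightarrow> real) \<times> (nat \<Rightarrow> real)"
  define Bop where "Bop k x = (\<Sum>i<n. Dmat chi chim chip k i * snd (snd x) i)"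
    for k and x :: "(nat \<Rightarrow> real) \<times> (nat \<Rightarrow> real) \<times> (nat \<Rightarrow> real)"
  define Fop where "Fop x = (\<Sum>i<n. f i * snd (snd x) i)"
    for x :: "(nat \<Rightarrow> real) \<times> (nat \<Rightarrow> real) \<times> (nat \<Rightarrow> real)"
  define comb where "comb x c z = ((\<lambda>i. fst x i + c * fst z i), (\<lambda>i. fst (snd x) i + c * fst (snd z) i),
      (\<lambda>i. snd (snd x) i + c * snd (snd z) i))"
    for x z :: "(nat \<Rightarrow> real) \<times> (nat \<Rightarrow> real) \<times> (nat \<Rightarrow> real)" and c :: real
  define L where "L = barlen chim chip"
  define xs where "xs = (u1, u2, w)"
  have linA: "Aop k (comb x c z) = Aop k x + c * Aop k z" for k x c z
    unfolding Aop_def comb_def by (simp add: sum.distrib sum_distrib_left algebra_simps)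
  have linB: "Bop k (comb x c z) = Bop k x + c * Bop k z" for k x c z
    unfolding Bop_def comb_def by (simp add: sum.distrib sum_distrib_left algebra_simps)
  have linF: "Fop (comb x c z) = Fop x + c * Fop z" for x c z
    unfolding Fop_def comb_def by (simp add: sum.distrib sum_distrib_left algebra_simps)
  have feas_of: "\<forall>k<m. (Bop k (a, b, c))\<^sup>2 \<le> 4 * L k * (L k - Aop k (a, b, c))"
    if "dual_feasible chi n chim chip m a b c t1 t2 t3" for a b c t1 t2 t3
  proof (intro allI impI)
    fix k assume "k < m"
    with that have "t2 k + Aop k (a, b, c) = L k" "t3 k + Bop k (a, b, c) = 0" "t1 k = 2 * L k"
      "inK (t1 k) (t2 k) (t3 k)"
      unfolding dual_feasible_def Aop_def Bop_def L_def by auto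
    then have "t2 k = L k - Aop k (a, b, c)" "t3 k = - Bop k (a, b, c)" "2 * t1 k * t2 k \<ge> (t3 k)\<^sup>2"
      unfolding inK_def by auto
    then show "(Bop k (a, b, c))\<^sup>2 \<le> 4 * L k * (L k - Aop k (a, b, c))"
      using \<open>t1 k = 2 * L k\<close> by simp
  qed
  have to_feas: "dual_feasible chi n chim chip m (fst x) (fst (snd x)) (snd (snd x))
      (\<lambda>k. 2 * L k) (\<lambda>k. L k - Aop k x) (\<lambda>k. - Bop k x)"
    if "\<forall>k\<in>{..<m}. (Bop k x)\<^sup>2 \<le> 4 * L k * (L k - Aop k x)" for x
    unfolding dual_feasible_def
  proof (intro allI impI conjI)
    fix k assume k: "k < m"
    have Lk: "L k > 0" using Lpos k unfolding L_def by simp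
    have h: "(Bop k x)\<^sup>2 \<le> 4 * L k * (L k - Aop k x)" using that k by simp
    have "0 \<le> 4 * L k * (L k - Aop k x)" using h zero_le_power2[of "Bop k x"] by linarith
    then show "0 \<le> L k - Aop k x" using Lk by (simp add: zero_le_mult_iff)
    show "0 \<le> 2 * L k" using Lk by simp
    show "L k - Aop k x + (\<Sum>i<n. Bmat chi chim chip 1 k i * fst x i + Bmat chi chim chip 2 k i * fst (snd x) i) =
      barlen chim chip k" unfolding Aop_def L_def by simp
    show "- Bop k x + (\<Sum>i<n. Dmat chi chim chip k i * snd (snd x) i) = 0" unfolding Bop_def by simp
    show "2 * L k = 2 * barlen chim chip k" unfolding L_def by simp
    show "inK (2 * L k) (L k - Aop k x) (- Bop k x)"
      unfolding inK_def using h Lk \<open>0 \<le> L k - Aop k x\<close> by (simp add: algebra_simps)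
  qed
  obtain t1 t2 t3 where "dual_feasible chi n chim chip m u1 u2 w t1 t2 t3"
    using ds unfolding dual_solution_def by blast
  from feas_of[OF this] have feas: "\<forall>k\<in>{..<m}. (Bop k xs)\<^sup>2 \<le> 4 * L k * (L k - Aop k xs)"
    unfolding xs_def by simp
  have opt: "Fop x \<le> Fop xs" if "\<forall>k\<in>{..<m}. (Bop k x)\<^sup>2 \<le> 4 * L k * (L k - Aop k x)" for x
  proof -
    have "dual_obj n f (snd (snd x)) \<le> dual_obj n f w"
      using ds to_feas[OF that] unfolding dual_solution_def by blast
    then show ?thesis unfolding dual_obj_def Fop_def xs_def by simp
  qed
  obtain lam where lam0: "\<forall>k\<in>{..<m}. lam k \<ge> 0"
    and lamt: "\<forall>k\<in>{..<m}. lam k \<noteq> 0 \<longrightarrow> (Bop k xs)\<^sup>2 = 4 * L k * (L k - Aop k xs)"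
    and lamid: "\<forall>d. Fop d = (\<Sum>k\<in>{..<m}. lam k * (2 * Bop k xs * Bop k d + 4 * L k * Aop k d))"
    using kkt_abs[of "{..<m}" L Aop comb Bop Fop xs] Lpos linA linB linF feas opt
    unfolding L_def by auto
  define s' where "s' k = 4 * L k * lam k" for k
  define q' where "q' k = 2 * lam k * Bop k xs" for k
  define r' where "r' k = lam k * (Bop k xs)\<^sup>2 / (2 * L k)" for k
  have Lp: "L k > 0" if "k < m" for k using Lpos that unfolding L_def by simp
  have pf: "primal_feasible chi n chim chip m f s' q' r'"
    unfolding primal_feasible_def
  proof (intro conjI allI impI)
    fix k assume k: "k < m"
    show "0 \<le> s' k" unfolding s'_def using lam0 Lp[OF k] k by simp
    show "0 \<le> r' k" unfolding r'_def using lam0 Lp[OF k] k by simp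
    show "inK (r' k) (s' k) (q' k)" unfolding inK_def r'_def s'_def q'_def
      using lam0 Lp[OF k] k by (simp add: field_simps power2_eq_square)
  next
    fix i assume i: "i < n"
    define d where "d = ((\<lambda>j::nat. if j = i then 1::real else 0), (\<lambda>j::nat. 0::real), (\<lambda>j::nat. 0::real))"
    have "Fop d = 0" "\<And>k. Bop k d = 0" "\<And>k. Aop k d = Bmat chi chim chip 1 k i"
      unfolding d_def Fop_def Bop_def Aop_def using sum_unit[OF i] by auto
    then have "0 = (\<Sum>k<m. lam k * (4 * L k * Bmat chi chim chip 1 k i))" using lamid[rule_format, of d] by simp
    then show "(\<Sum>k<m. Bmat chi chim chip 1 k i * s' k) = 0" unfolding s'_def
      by (simp add: algebra_simps)
  next
    fix i assume i: "i < n"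
    define d where "d = ((\<lambda>j::nat. 0::real), (\<lambda>j::nat. if j = i then 1::real else 0), (\<lambda>j::nat. 0::real))"
    have "Fop d = 0" "\<And>k. Bop k d = 0" "\<And>k. Aop k d = Bmat chi chim chip 2 k i"
      unfolding d_def Fop_def Bop_def Aop_def using sum_unit[OF i] by auto
    then have "0 = (\<Sum>k<m. lam k * (4 * L k * Bmat chi chim chip 2 k i))" using lamid[rule_format, of d] by simp
    then show "(\<Sum>k<m. Bmat chi chim chip 2 k i * s' k) = 0" unfolding s'_def
      by (simp add: algebra_simps)
  next
    fix i assume i: "i < n"
    define d where "d = ((\<lambda>j::nat. 0::real), (\<lambda>j::nat. 0::real), (\<lambda>j::nat. if j = i then 1::real else 0))"
    have "Fop d = f i" "\<And>k. Bop k d = Dmat chi chim chip k i" "\<And>k. Aop k d = 0"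
      unfolding d_def Fop_def Bop_def Aop_def using sum_unit[OF i] by auto
    then have "f i = (\<Sum>k<m. lam k * (2 * Bop k xs * Dmat chi chim chip k i))" using lamid[rule_format, of d] by simp
    then show "(\<Sum>k<m. Dmat chi chim chip k i * q' k) = f i" unfolding q'_def
      by (simp add: algebra_simps)
  qed
  have objeq: "primal_obj chim chip m s' r' = Fop xs"
  proof -
    have "primal_obj chim chip m s' r' = (\<Sum>k<m. lam k * (4 * (L k)\<^sup>2 + (Bop k xs)\<^sup>2))"
      unfolding primal_obj_def L_def[symmetric] s'_def r'_def sum_distrib_left sum.distrib[symmetric]
    proof (rule sum.cong)
      fix k assume "k \<in> {..<m}"
      then have "L k > 0" using Lp by simp
      then show "L k * (4 * L k * lam k) + 2 * (L k * (lam k * (Bop k xs)\<^sup>2 / (2 * L k))) =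
        lam k * (4 * (L k)\<^sup>2 + (Bop k xs)\<^sup>2)" by (simp add: field_simps power2_eq_square)
    qed simp
    also have "\<dots> = (\<Sum>k<m. lam k * (2 * Bop k xs * Bop k xs + 4 * L k * Aop k xs))"
    proof (rule sum.cong)
      fix k assume "k \<in> {..<m}"
      then show "lam k * (4 * (L k)\<^sup>2 + (Bop k xs)\<^sup>2) = lam k * (2 * Bop k xs * Bop k xs + 4 * L k * Aop k xs)"
      proof (cases "lam k = 0")
        case False
        then have "(Bop k xs)\<^sup>2 = 4 * L k * (L k - Aop k xs)" using lamt \<open>k \<in> {..<m}\<close> by blast
        then have "4 * (L k)\<^sup>2 + (Bop k xs)\<^sup>2 = 2 * Bop k xs * Bop k xs + 4 * L k * Aop k xs"
          by (simp add: power2_eq_square algebra_simps)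
        then show ?thesis by simp
      qed simp
    qed simp
    also have "\<dots> = Fop xs" using lamid[rule_format, of xs] by simp
    finally show ?thesis .
  qed
  have pfs: "primal_feasible chi n chim chip m f s q r" and
    le: "primal_obj chim chip m s r \<le> primal_obj chim chip m s' r'"
    using ps pf unfolding primal_solution_def by blast+
  \<comment> \<open>complementary slackness\<close>
  define T where "T k = s k * (L k - Aop k xs) + 2 * L k * r k - q k * Bop k xs" for k
  have sA: "(\<Sum>k<m. s k * Aop k xs) = 0"
  proof -
    have "(\<Sum>k<m. s k * Aop k xs) = (\<Sum>i<n. u1 i * (\<Sum>k<m. Bmat chi chim chip 1 k i * s k) + u2 i * (\<Sum>k<m. Bmat chi chim chip 2 k i * s k))"
      unfolding Aop_def xs_def by (simp add: sum_distrib_left sum.distrib algebra_simps sum.swap[of _ "{..<m}"])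
    also have "\<dots> = 0" using pfs unfolding primal_feasible_def by simp
    finally show ?thesis .
  qed
  have qB: "(\<Sum>k<m. q k * Bop k xs) = Fop xs"
  proof -
    have "(\<Sum>k<m. q k * Bop k xs) = (\<Sum>i<n. w i * (\<Sum>k<m. Dmat chi chim chip k i * q k))"
      unfolding Bop_def xs_def by (simp add: sum_distrib_left algebra_simps sum.swap[of _ "{..<m}"])
    also have "\<dots> = Fop xs" using pfs unfolding primal_feasible_def Fop_def xs_def by (simp add: mult.commute)
    finally show ?thesis .
  qed
  have sumT: "(\<Sum>k<m. T k) = primal_obj chim chip m s r - Fop xs"
  proof -
    have "(\<Sum>k<m. T k) = (\<Sum>k<m. L k * s k) + 2 * (\<Sum>k<m. L k * r k) - (\<Sum>k<m. s k * Aop k xs) - (\<Sum>k<m. q k * Bop k xs)"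
      unfolding T_def by (simp add: sum.distrib sum_subtractf sum_distrib_left algebra_simps)
    then show ?thesis using sA qB unfolding primal_obj_def L_def by simp
  qed
  have Tnn: "\<forall>k\<in>{..<m}. T k \<ge> 0"
  proof
    fix k assume "k \<in> {..<m}"
    then have k: "k < m" by simp
    have "s k \<ge> 0" "r k \<ge> 0" "2 * r k * s k \<ge> (q k)\<^sup>2"
      using pfs k unfolding primal_feasible_def inK_def by auto
    then show "T k \<ge> 0" unfolding T_def using T_nonneg[OF Lp[OF k]] feas k by force
  qed
  have "(\<Sum>k<m. T k) \<le> 0" using sumT le objeq by simp
  then have "(\<Sum>k<m. T k) = 0" using sum_nonneg[of "{..<m}" T] Tnn by (meson antisym)
  then have "T k0 = 0" using sum_nonneg_eq_0_iff[of "{..<m}" T] Tnn km by simp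
  moreover have "s k0 > 0" "r k0 \<ge> 0" "2 * r k0 * s k0 \<ge> (q k0)\<^sup>2"
    using pfs km sk unfolding primal_feasible_def inK_def by auto
  ultimately have "(Bop k0 xs)\<^sup>2 = 4 * L k0 * (L k0 - Aop k0 xs)"
    using T_zero[OF Lp[OF km]] feas km unfolding T_def by force
  then show ?thesis unfolding Bop_def Aop_def L_def xs_def by simp
qed



lemma node_sum:
  assumes inj: "inj_on chi {..<n}"
  shows "(\<Sum>i<n. (if chi i = p then 1 else 0) * v i) = node_fun chi n v p"
proof (cases "\<exists>i<n. chi i = p")
  case True
  then obtain i0 where i0: "i0 < n" "chi i0 = p" by blast
  have the: "(THE i. i < n \<and> chi i = p) = i0"
    by (rule the_equality) (use i0 inj in \<open>auto simp: inj_on_def\<close>)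
  have "(\<Sum>i<n. (if chi i = p then 1 else 0) * v i) = (\<Sum>i<n. if i = i0 then v i else 0)"
    by (rule sum.cong) (use i0 inj in \<open>auto simp: inj_on_def\<close>)
  also have "\<dots> = v i0" using i0 by (subst sum.delta) auto
  finally show ?thesis unfolding node_fun_def using True the by simp
next
  case False
  then show ?thesis unfolding node_fun_def by (auto intro!: sum.neutral)
qed

lemma inc_sum:
  assumes inj: "inj_on chi {..<n}"
  shows "(\<Sum>i<n. inc chi chim chip k i * v i) = node_fun chi n v (chip k) - node_fun chi n v (chim k)"
proof -
  have "(\<Sum>i<n. inc chi chim chip k i * v i) =
     (\<Sum>i<n. (if chi i = chip k then 1 else 0) * v i) - (\<Sum>i<n. (if chi i = chim k then 1 else 0) * v i)"
    unfolding inc_def sum_subtractf[symmetric] by (rule sum.cong) (auto simp: algebra_simps)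
  then show ?thesis using node_sum[OF inj] by simp
qed

lemma B_sum:
  assumes inj: "inj_on chi {..<n}"
  shows "(\<Sum>i<n. Bmat chi chim chip j k i * v i) =
    (node_fun chi n v (chip k) - node_fun chi n v (chim k)) * (chip k - chim k) $ j / barlen chim chip k"
proof -
  have "(\<Sum>i<n. Bmat chi chim chip j k i * v i) =
     (\<Sum>i<n. inc chi chim chip k i * v i) * (chip k - chim k) $ j / barlen chim chip k"
    unfolding Bmat_def sum_divide_distrib sum_distrib_right by (rule sum.cong) auto
  then show ?thesis using inc_sum[OF inj] by simp
qed

definition Aval :: "(pt \<Rightarrow> real) \<Rightarrow> (pt \<Rightarrow> real) \<Rightarrow> pt \<Rightarrow> pt \<Rightarrow> real" where
  "Aval U1 U2 p q = ((U1 q - U1 p) * (q - p) $ 1 + (U2 q - U2 p) * (q - p) $ 2) / norm (q - p)"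

lemma Aval_sym: "Aval U1 U2 p q = Aval U1 U2 q p"
proof -
  have "norm (q - p) = norm (p - q)" by (rule norm_minus_commute)
  moreover have "(U1 q - U1 p) * (q - p) $ 1 + (U2 q - U2 p) * (q - p) $ 2 =
     (U1 p - U1 q) * (p - q) $ 1 + (U2 p - U2 q) * (p - q) $ 2" by (simp add: algebra_simps)
  ultimately show ?thesis unfolding Aval_def by simp
qed

lemma dual_ineq:
  assumes "dual_solution chi n chim chip m f u1 u2 w" "k < m"
  shows "(\<Sum>i<n. Dmat chi chim chip k i * w i)\<^sup>2 \<le> 4 * barlen chim chip k *
     (barlen chim chip k - (\<Sum>i<n. Bmat chi chim chip 1 k i * u1 i + Bmat chi chim chip 2 k i * u2 i))"
proof -
  obtain t1 t2 t3 where "dual_feasible chi n chim chip m u1 u2 w t1 t2 t3"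
    using assms unfolding dual_solution_def by blast
  then have "t2 k = barlen chim chip k - (\<Sum>i<n. Bmat chi chim chip 1 k i * u1 i + Bmat chi chim chip 2 k i * u2 i)"
    "t3 k = - (\<Sum>i<n. Dmat chi chim chip k i * w i)" "t1 k = 2 * barlen chim chip k"
    "2 * t1 k * t2 k \<ge> (t3 k)\<^sup>2"
    using assms(2) unfolding dual_feasible_def inK_def by (auto simp: algebra_simps)
  then show ?thesis by simp
qed

theorem proposition6p2:
  fixes \<Omega> :: "pt set" and X :: "pt set" and fX :: "pt set \<Rightarrow> real"
    and chi chim chip :: "nat \<Rightarrow> pt" and n m :: nat
    and s q r u1 u2 w :: "nat \<Rightarrow> real" and x1 x2 x3 :: pt and k :: nat
  assumes "open \<Omega>" and "connected \<Omega>" and "bounded \<Omega>" and "\<Omega> \<noteq> {}"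
    and "finite X" and "X \<subseteq> closure \<Omega>"
    and "X - frontier \<Omega> \<subseteq> interior (convex hull (X \<inter> frontier \<Omega>))"
    and "bij_betw chi {..<n} (X - frontier \<Omega>)"
    and "m = card X * (card X - 1) div 2"
    and "bij_betw (\<lambda>k. {chim k, chip k}) {..<m} {e. \<exists>a\<in>X. \<exists>b\<in>X. a \<noteq> b \<and> e = {a, b}}"
    and "primal_solution chi n chim chip m (\<lambda>i. fX {chi i}) s q r"
    and "dual_solution chi n chim chip m (\<lambda>i. fX {chi i}) u1 u2 w"
    and "x1 \<in> X" and "x2 \<in> X" and "x3 \<in> X"
    and "collinear {x1, x2, x3}" and "x2 \<in> closed_segment x1 x3"
    and "k < m" and "{chim k, chip k} = {x1, x3}"
    and "s k \<noteq> 0"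
  shows "collinear {(x1, node_fun chi n (\<lambda>i. w i / 2) x1),
                    (x2, node_fun chi n (\<lambda>i. w i / 2) x2),
                    (x3, node_fun chi n (\<lambda>i. w i / 2) x3)}"
proof -
  note bij = assms(10)
  have inj: "inj_on chi {..<n}" using assms(8) by (rule bij_betw_imp_inj_on)
  have img: "(\<lambda>k. {chim k, chip k}) ` {..<m} = {e. \<exists>a\<in>X. \<exists>b\<in>X. a \<noteq> b \<and> e = {a, b}}"
    using bij by (rule bij_betw_imp_surj_on)
  have dist: "chim k' \<noteq> chip k'" if "k' < m" for k'
  proof -
    have "{chim k', chip k'} \<in> {e. \<exists>a\<in>X. \<exists>b\<in>X. a \<noteq> b \<and> e = {a, b}}" using img that by blast
    then obtain a b where "a \<noteq> b" "{chim k', chip k'} = {a, b}" by blast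
    then show ?thesis by (auto simp: doubleton_eq_iff)
  qed
  have Lpos: "barlen chim chip k' > 0" if "k' < m" for k'
    using dist[OF that] unfolding barlen_def by simp
  have bar_ex: "\<exists>k'<m. {chim k', chip k'} = {a, b}" if "a \<in> X" "b \<in> X" "a \<noteq> b" for a b
  proof -
    have "{a, b} \<in> (\<lambda>k. {chim k, chip k}) ` {..<m}" using img that by blast
    then show ?thesis by force
  qed
  define U1 where "U1 = node_fun chi n u1"
  define U2 where "U2 = node_fun chi n u2"
  define W where "W = node_fun chi n w"
  have barval: "(\<Sum>i<n. Dmat chi chim chip k' i * w i)\<^sup>2 = (W b - W a)\<^sup>2 \<and>
      barlen chim chip k' = norm (b - a) \<and>
      (\<Sum>i<n. Bmat chi chim chip 1 k' i * u1 i + Bmat chi chim chip 2 k' i * u2 i) = Aval U1 U2 a b"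
    if hk: "{chim k', chip k'} = {a, b}" for k' a b
  proof -
    have D: "(\<Sum>i<n. Dmat chi chim chip k' i * w i) = W (chip k') - W (chim k')"
      unfolding Dmat_def W_def using inc_sum[OF inj] by simp
    have A: "(\<Sum>i<n. Bmat chi chim chip 1 k' i * u1 i + Bmat chi chim chip 2 k' i * u2 i) =
        Aval U1 U2 (chim k') (chip k')"
      unfolding sum.distrib B_sum[OF inj] Aval_def U1_def U2_def barlen_def by (simp add: add_divide_distrib)
    consider "chim k' = a" "chip k' = b" | "chim k' = b" "chip k' = a"
      using hk unfolding doubleton_eq_iff by blast
    then show ?thesis
    proof cases
      case 1 then show ?thesis using D A unfolding barlen_def by simp
    next
      case 2 then show ?thesis using D A Aval_sym[of U1 U2 a b] norm_minus_commute[of a b]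
        unfolding barlen_def by (simp add: power2_commute)
    qed
  qed
  have ineq: "(W b - W a)\<^sup>2 \<le> 4 * norm (b - a) * (norm (b - a) - Aval U1 U2 a b)"
    if ha: "a \<in> X" "b \<in> X" "a \<noteq> b" for a b
  proof -
    obtain k' where "k' < m" "{chim k', chip k'} = {a, b}" using bar_ex[OF ha] by blast
    note e = barval[OF this(2)]
    have "(\<Sum>i<n. Dmat chi chim chip k' i * w i)\<^sup>2 \<le> 4 * barlen chim chip k' *
     (barlen chim chip k' - (\<Sum>i<n. Bmat chi chim chip 1 k' i * u1 i + Bmat chi chim chip 2 k' i * u2 i))"
      by (rule dual_ineq[OF assms(12) \<open>k' < m\<close>])
    then show ?thesis using e by simp
  qed
  have tight: "(W x3 - W x1)\<^sup>2 = 4 * norm (x3 - x1) * (norm (x3 - x1) - Aval U1 U2 x1 x3)"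
  proof -
    note e = barval[OF assms(19)]
    have "(\<Sum>i<n. Dmat chi chim chip k i * w i)\<^sup>2 = 4 * barlen chim chip k *
     (barlen chim chip k - (\<Sum>i<n. Bmat chi chim chip 1 k i * u1 i + Bmat chi chim chip 2 k i * u2 i))"
      by (rule gap_tight[OF Lpos assms(11) assms(12) assms(18) assms(20)])
    then show ?thesis using e by simp
  qed
  have x13: "x1 \<noteq> x3" using dist[OF assms(18)] assms(19) by (auto simp: doubleton_eq_iff)
  have half: "node_fun chi n (\<lambda>i. w i / 2) x = W x / 2" for x
    unfolding node_fun_def W_def by auto
  obtain \<theta> where th: "0 \<le> \<theta>" "\<theta> \<le> 1" "x2 = (1 - \<theta>) *\<^sub>R x1 + \<theta> *\<^sub>R x3"
    using assms(17) unfolding closed_segment_def by blast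
  show ?thesis
  proof (cases "x2 = x1 \<or> x2 = x3")
    case True
    then show ?thesis by (auto simp: insert_commute)
  next
    case False
    then have th0: "0 < \<theta>" "\<theta> < 1" using th by (auto simp: le_less)
    define N where "N = norm (x3 - x1)"
    have Np: "N > 0" using x13 unfolding N_def by simp
    define e where "e = x3 - x1"
    have d12: "x2 - x1 = \<theta> *\<^sub>R e" unfolding e_def th(3) by (simp add: algebra_simps)
    have d23: "x3 - x2 = (1 - \<theta>) *\<^sub>R e" unfolding e_def th(3) by (simp add: algebra_simps)
    define \<alpha> where "\<alpha> a b = ((U1 b - U1 a) * e $ 1 + (U2 b - U2 a) * e $ 2) / N" for a b
    have n12: "norm (x2 - x1) = \<theta> * N" unfolding d12 N_def e_def using th0 by simp
    have n23: "norm (x3 - x2) = (1 - \<theta>) * N" unfolding d23 N_def e_def using th0 by simp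
    have ne: "norm e = N" unfolding N_def e_def ..
    have A12: "Aval U1 U2 x1 x2 = \<alpha> x1 x2"
      unfolding Aval_def n12 d12 \<alpha>_def using th0 Np by (simp add: field_simps ne)
    have A23: "Aval U1 U2 x2 x3 = \<alpha> x2 x3"
          proof -
      have c: "(x3 - x2) $ 1 = (1 - \<theta>) * e $ 1" "(x3 - x2) $ 2 = (1 - \<theta>) * e $ 2" by (simp_all add: d23)
      have "Aval U1 U2 x2 x3 = ((U1 x3 - U1 x2) * ((1 - \<theta>) * e $ 1) + (U2 x3 - U2 x2) * ((1 - \<theta>) * e $ 2)) / ((1 - \<theta>) * N)"
        unfolding Aval_def by (simp only: c n23)
      also have "\<dots> = \<alpha> x2 x3" unfolding \<alpha>_def using th0 Np by (simp add: field_simps)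
      finally show ?thesis .
    qed
    have A13: "Aval U1 U2 x1 x3 = \<alpha> x1 x2 + \<alpha> x2 x3"
      unfolding Aval_def N_def[symmetric] e_def[symmetric] \<alpha>_def using Np by (simp add: field_simps ne)
    have i12: "(W x2 - W x1)\<^sup>2 \<le> 4 * (\<theta> * N) * (\<theta> * N - \<alpha> x1 x2)"
    proof -
      have "x1 \<noteq> x2" using False by auto
      from ineq[OF assms(13) assms(14) this] show ?thesis unfolding A12 n12 .
    qed
    have i23: "(W x3 - W x2)\<^sup>2 \<le> 4 * ((1 - \<theta>) * N) * ((1 - \<theta>) * N - \<alpha> x2 x3)"
    proof -
      have "x2 \<noteq> x3" using False by auto
      from ineq[OF assms(14) assms(15) this] show ?thesis unfolding A23 n23 .
    qed
    have t13: "((W x2 - W x1) + (W x3 - W x2))\<^sup>2 =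
        4 * (\<theta> * N + (1 - \<theta>) * N) * ((\<theta> * N - \<alpha> x1 x2) + ((1 - \<theta>) * N - \<alpha> x2 x3))"
      using tight A13 unfolding N_def by (simp add: algebra_simps)
    have "(W x2 - W x1) * ((1 - \<theta>) * N) = (W x3 - W x2) * (\<theta> * N)"
      by (rule collin_real[OF _ _ i12 i23 t13]) (use th0 Np in auto)
    then have "(W x2 - W x1) * (1 - \<theta>) = (W x3 - W x2) * \<theta>" using Np by simp
    then have Wrel: "W x2 = (1 - \<theta>) * W x1 + \<theta> * W x3" by (simp add: algebra_simps)
    have "(x2, W x2 / 2) = (1 - \<theta>) *\<^sub>R (x1, W x1 / 2) + (1 - (1 - \<theta>)) *\<^sub>R (x3, W x3 / 2)"
      using th(3) Wrel by (simp add: field_simps)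
    then show ?thesis unfolding half collinear_3_expand by blast
  qed
qed

end
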